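(* (i) There is a function $\delta:\mathbb{N}\to[0,\infty)$ with $\delta(n)\to 0$ as $n\to\infty$ such that for every positive integer $n$ for which a Hadamard matrix of order $n+1$ exists, there exists a real orthogonal $n\times n$ matrix $M=(m_{i,j})$ with $(1-\delta(n))\frac{1}{\sqrt{n}}\le |m_{i,j}|\le (1+\delta(n))\frac{1}{\sqrt{n}}$ for all $i,j$ (i.e. all entries have modulus $(1+o(1))\frac{1}{\sqrt{n}}$). In particular, this is the case if $n=p^r$ where $p$ is a prime with $p\equiv 3 \pmod 4$ and $r$ is odd. (ii) If $n$ is a prime with $n\equiv 3\pmod 4$, then the matrix $M$ in (i) can be chosen to be circulant.
   Context: A Hadamard matrix of order $N$ is an $N\times N$ matrix with entries in $\{+1,-1\}$ whose rows are pairwise orthogonal. A matrix $M=(m_{i,j})_{i,j\in\mathbb{Z}_n}$ is circulant if $m_{i,j}$ depends only on $j-i \bmod n$. *)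

theory Defs
  imports "HOL-Analysis.Analysis" "HOL-Computational_Algebra.Primes"
begin

text \<open>Square matrices of order n are represented as functions nat => nat => 'a,
  only the entries with indices i, j < n being relevant.\<close>

definition hadamard_matrix :: "nat \<Rightarrow> (nat \<Rightarrow> nat \<Rightarrow> int) \<Rightarrow> bool" where
  "hadamard_matrix N H \<longleftrightarrow>
     (\<forall>i<N. \<forall>j<N. H i j = 1 \<or> H i j = -1) \<and>
     (\<forall>i<N. \<forall>j<N. i \<noteq> j \<longrightarrow> (\<Sum>k<N. H i k * H j k) = 0)"

definition hadamard_exists :: "nat \<Rightarrow> bool" where
  "hadamard_exists N \<longleftrightarrow> (\<exists>H. hadamard_matrix N H)"

definition orthogonal_mat :: "nat \<Rightarrow> (nat \<Rightarrow> nat \<Rightarrow> real) \<Rightarrow> bool" where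
  "orthogonal_mat n M \<longleftrightarrow>
     (\<forall>i<n. \<forall>j<n. (\<Sum>k<n. M i k * M j k) = (if i = j then 1 else 0))"

definition circulant_mat :: "nat \<Rightarrow> (nat \<Rightarrow> nat \<Rightarrow> real) \<Rightarrow> bool" where
  "circulant_mat n M \<longleftrightarrow>
     (\<forall>i<n. \<forall>j<n. \<forall>i'<n. \<forall>j'<n.
        (int j - int i) mod int n = (int j' - int i') mod int n \<longrightarrow> M i j = M i' j')"

definition flat_entries :: "real \<Rightarrow> nat \<Rightarrow> (nat \<Rightarrow> nat \<Rightarrow> real) \<Rightarrow> bool" where
  "flat_entries d n M \<longleftrightarrow>
     (\<forall>i<n. \<forall>j<n. (1 - d) * (1 / sqrt n) \<le> \<bar>M i j\<bar> \<and> \<bar>M i j\<bar> \<le> (1 + d) * (1 / sqrt n))"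

end

theory Submission
  imports Defs "HOL-Real_Asymp.Real_Asymp" "HOL-Algebra.Algebraic_Closure"
    "HOL-Algebra.Multiplicative_Group" "HOL-Number_Theory.Residues"
begin

hide_const (open) Divisibility.prime


definition aa :: "nat \<Rightarrow> real" where "aa n = 1 / sqrt (real n + 1)"
definition bb :: "nat \<Rightarrow> real" where "bb n = (1 / sqrt (real n + 1) + 1) / real n"
definition dlt :: "nat \<Rightarrow> real" where
  "dlt n = max \<bar>sqrt (real n) * (aa n + bb n) - 1\<bar> \<bar>sqrt (real n) * \<bar>bb n - aa n\<bar> - 1\<bar>"

lemma dlt_nonneg: "dlt n \<ge> 0" by (simp add: dlt_def)

lemma dlt_lim: "dlt \<longlonglongrightarrow> 0"
proof -
  have l1: "(\<lambda>n. sqrt (real n) * (aa n + bb n)) \<longlonglongrightarrow> 1"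
    unfolding aa_def bb_def by real_asymp
  have l2: "(\<lambda>n. sqrt (real n) * (bb n - aa n)) \<longlonglongrightarrow> -1"
    unfolding aa_def bb_def by real_asymp
  have l3: "(\<lambda>n. sqrt (real n) * \<bar>bb n - aa n\<bar>) \<longlonglongrightarrow> 1"
  proof -
    have "(\<lambda>n. \<bar>sqrt (real n) * (bb n - aa n)\<bar>) \<longlonglongrightarrow> \<bar>-1\<bar>"
      by (rule tendsto_rabs[OF l2])
    thus ?thesis by (simp add: abs_mult)
  qed
  have a: "(\<lambda>n. \<bar>sqrt (real n) * (aa n + bb n) - 1\<bar>) \<longlonglongrightarrow> \<bar>1 - 1\<bar>"
    by (intro tendsto_intros l1)
  have b: "(\<lambda>n. \<bar>sqrt (real n) * \<bar>bb n - aa n\<bar> - 1\<bar>) \<longlonglongrightarrow> \<bar>1 - 1\<bar>"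
    by (intro tendsto_intros l3)
  have "(\<lambda>n. max \<bar>sqrt (real n) * (aa n + bb n) - 1\<bar> \<bar>sqrt (real n) * \<bar>bb n - aa n\<bar> - 1\<bar>) \<longlonglongrightarrow> max \<bar>1 - 1\<bar> \<bar>1 - 1\<bar>"
    by (rule tendsto_max[OF a b])
  thus ?thesis unfolding dlt_def by simp
qed

definition core :: "nat \<Rightarrow> (nat \<Rightarrow> nat \<Rightarrow> int) \<Rightarrow> bool" where
  "core n C \<longleftrightarrow> (\<forall>i<n. \<forall>j<n. C i j = 1 \<or> C i j = -1) \<and>
     (\<forall>i<n. \<forall>j<n. (\<Sum>k<n. C i k * C j k) = (if i = j then int n + 1 else 0) - 1) \<and>
     (\<forall>i<n. (\<Sum>k<n. C i k) = -1)"

definition circ_int :: "nat \<Rightarrow> (nat \<Rightarrow> nat \<Rightarrow> int) \<Rightarrow> bool" where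
  "circ_int n C \<longleftrightarrow>
     (\<forall>i<n. \<forall>j<n. \<forall>i'<n. \<forall>j'<n.
        (int j - int i) mod int n = (int j' - int i') mod int n \<longrightarrow> C i j = C i' j')"

definition mkM :: "nat \<Rightarrow> (nat \<Rightarrow> nat \<Rightarrow> int) \<Rightarrow> nat \<Rightarrow> nat \<Rightarrow> real" where
  "mkM n C i j = aa n * of_int (C i j) + bb n"

lemma ab_identity:
  assumes "n > 0"
  shows "aa n ^ 2 * (real n + 1) = 1" and "n * bb n ^ 2 - 2 * aa n * bb n - aa n ^ 2 = 0"
proof -
  define s where "s = sqrt (real n + 1)"
  have s2: "s^2 = real n + 1" unfolding s_def by simp
  have sp: "s > 0" unfolding s_def by simp
  show "aa n ^ 2 * (real n + 1) = 1" unfolding aa_def s_def[symmetric] using s2 sp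
    by (simp add: power_divide)
  have "n * bb n ^ 2 - 2 * aa n * bb n - aa n ^ 2 = (1 - (real n + 1) / s^2) / n"
    unfolding aa_def bb_def s_def[symmetric] using sp assms
    by (simp add: field_simps power2_eq_square)
  also have "\<dots> = 0" using s2 sp by simp
  finally show "n * bb n ^ 2 - 2 * aa n * bb n - aa n ^ 2 = 0" .
qed

lemma core_orth:
  assumes "n > 0" "core n C"
  shows "orthogonal_mat n (mkM n C)"
  unfolding orthogonal_mat_def
proof (intro allI impI)
  fix i j assume ij: "i < n" "j < n"
  have cc: "(\<Sum>k<n. real_of_int (C i k) * real_of_int (C j k)) = (if i = j then real n + 1 else 0) - 1"
  proof -
    have "(\<Sum>k<n. real_of_int (C i k) * real_of_int (C j k)) = real_of_int (\<Sum>k<n. C i k * C j k)"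
      by simp
    also have "\<dots> = (if i = j then real n + 1 else 0) - 1" using assms(2) ij unfolding core_def by auto
    finally show ?thesis .
  qed
  have ci: "(\<Sum>k<n. real_of_int (C i k)) = -1"
  proof -
    have "(\<Sum>k<n. real_of_int (C i k)) = real_of_int (\<Sum>k<n. C i k)" by simp
    also have "\<dots> = -1" using assms(2) ij unfolding core_def by auto
    finally show ?thesis .
  qed
  have cj: "(\<Sum>k<n. real_of_int (C j k)) = -1"
  proof -
    have "(\<Sum>k<n. real_of_int (C j k)) = real_of_int (\<Sum>k<n. C j k)" by simp
    also have "\<dots> = -1" using assms(2) ij unfolding core_def by auto
    finally show ?thesis .
  qed
  have "(\<Sum>k<n. mkM n C i k * mkM n C j k) =
     aa n ^ 2 * (\<Sum>k<n. real_of_int (C i k) * real_of_int (C j k))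
     + aa n * bb n * (\<Sum>k<n. real_of_int (C i k)) + aa n * bb n * (\<Sum>k<n. real_of_int (C j k))
     + real n * bb n ^ 2"
    unfolding mkM_def by (simp add: algebra_simps power2_eq_square sum.distrib sum_distrib_left)
  also have "\<dots> = aa n ^ 2 * (if i = j then real n + 1 else 0) + (n * bb n ^ 2 - 2 * aa n * bb n - aa n ^ 2)"
    unfolding cc ci cj by (simp add: algebra_simps)
  also have "\<dots> = (if i = j then 1 else 0)"
    using ab_identity[OF assms(1)] by (auto simp: algebra_simps)
  finally show "(\<Sum>k<n. mkM n C i k * mkM n C j k) = (if i = j then 1 else 0)" .
qed

lemma core_flat:
  assumes "n > 0" "core n C"
  shows "flat_entries (dlt n) n (mkM n C)"
  unfolding flat_entries_def
proof (intro allI impI)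
  fix i j assume ij: "i < n" "j < n"
  have sp: "sqrt (real n) > 0" using assms by simp
  have key: "\<bar>sqrt (real n) * \<bar>mkM n C i j\<bar> - 1\<bar> \<le> dlt n"
  proof -
    have "C i j = 1 \<or> C i j = -1" using assms(2) ij unfolding core_def by auto
    moreover have "aa n > 0" unfolding aa_def by simp
    moreover have "bb n > 0" using assms unfolding bb_def by (intro divide_pos_pos add_pos_pos) auto
    ultimately show ?thesis unfolding mkM_def dlt_def
      by (auto simp: abs_if algebra_simps)
  qed
  define x where "x = \<bar>mkM n C i j\<bar>"
  have "x = (sqrt (real n) * x) * (1 / sqrt (real n))" using sp by simp
  moreover have "1 - dlt n \<le> sqrt (real n) * x" "sqrt (real n) * x \<le> 1 + dlt n"
    using key unfolding x_def by linarith+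
  moreover have "1 / sqrt (real n) > 0" using sp by simp
  ultimately show "(1 - dlt n) * (1 / sqrt (real n)) \<le> \<bar>mkM n C i j\<bar> \<and> \<bar>mkM n C i j\<bar> \<le> (1 + dlt n) * (1 / sqrt (real n))"
    unfolding x_def[symmetric] by (metis mult_right_mono less_imp_le)
qed

lemma core_circ:
  assumes "circ_int n C" shows "circulant_mat n (mkM n C)"
  using assms unfolding circ_int_def circulant_mat_def mkM_def by metis




lemma pm1_sq: "x = 1 \<or> x = -1 \<Longrightarrow> x * x = (1::int)" by auto

lemma had_to_core:
  assumes "hadamard_matrix (n+1) H"
  shows "\<exists>C. core n C"
proof -
  have pm: "\<And>i j. i < n+1 \<Longrightarrow> j < n+1 \<Longrightarrow> H i j = 1 \<or> H i j = -1"
    using assms unfolding hadamard_matrix_def by auto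
  have orth: "\<And>i j. i < n+1 \<Longrightarrow> j < n+1 \<Longrightarrow> i \<noteq> j \<Longrightarrow> (\<Sum>k<n+1. H i k * H j k) = 0"
    using assms unfolding hadamard_matrix_def by auto
  define H' where "H' i j = H i 0 * H i j * H 0 j * H 0 0" for i j
  have sq: "\<And>i j. i < n+1 \<Longrightarrow> j < n+1 \<Longrightarrow> H i j * H i j = 1" using pm pm1_sq by blast
  have H'pm: "H' i j = 1 \<or> H' i j = -1" if "i < n+1" "j < n+1" for i j
    using pm[OF that] pm[of i 0] pm[of 0 j] pm[of 0 0] that unfolding H'_def by auto
  have H'0: "H' i 0 = 1" if "i < n+1" for i
  proof -
    have "H' i 0 = (H i 0 * H i 0) * (H 0 0 * H 0 0)" unfolding H'_def by (simp add: algebra_simps)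
    thus ?thesis using sq[OF that, of 0] sq[of 0 0] by simp
  qed
  have H'r0: "H' 0 j = 1" if "j < n+1" for j
  proof -
    have "H' 0 j = (H 0 0 * H 0 0) * (H 0 j * H 0 j)" unfolding H'_def by (simp add: algebra_simps)
    thus ?thesis using sq[OF that, of 0] sq[of 0 0] sq[of 0 j] that by simp
  qed
  have H'orth: "(\<Sum>k<n+1. H' i k * H' j k) = (if i = j then int n + 1 else 0)" if "i < n+1" "j < n+1" for i j
  proof (cases "i = j")
    case True
    have "(\<Sum>k<n+1. H' i k * H' j k) = (\<Sum>k<n+1. 1)"
      using H'pm[OF that(1)] True by (intro sum.cong) (auto intro: pm1_sq)
    thus ?thesis using True by simp
  next
    case False
    have "(\<Sum>k<n+1. H' i k * H' j k) = (\<Sum>k<n+1. (H i 0 * H j 0) * (H i k * H j k) * ((H 0 k * H 0 k) * (H 0 0 * H 0 0)))"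
      unfolding H'_def by (intro sum.cong) (auto simp: algebra_simps)
    also have "\<dots> = (\<Sum>k<n+1. (H i 0 * H j 0) * (H i k * H j k))"
      using sq[of 0 0] sq[of 0] by (intro sum.cong) auto
    also have "\<dots> = (H i 0 * H j 0) * (\<Sum>k<n+1. H i k * H j k)" by (rule sum_distrib_left[symmetric])
    also have "\<dots> = 0" using orth[OF that False] by simp
    finally show ?thesis using False by simp
  qed
  define C where "C i j = H' (Suc i) (Suc j)" for i j
  have "core n C" unfolding core_def
  proof (intro conjI allI impI)
    fix i j assume "i < n" "j < n"
    thus "C i j = 1 \<or> C i j = -1" unfolding C_def using H'pm by auto
  next
    fix i j assume ij: "i < n" "j < n"
    have "(\<Sum>k<n+1. H' (Suc i) k * H' (Suc j) k) = H' (Suc i) 0 * H' (Suc j) 0 + (\<Sum>k<n. C i k * C j k)"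
      unfolding C_def by (simp add: sum.lessThan_Suc_shift del: sum.lessThan_Suc)
    moreover have "H' (Suc i) 0 * H' (Suc j) 0 = 1" using H'0 ij by simp
    moreover have "(\<Sum>k<n+1. H' (Suc i) k * H' (Suc j) k) = (if i = j then int n + 1 else 0)"
      using H'orth[of "Suc i" "Suc j"] ij by simp
    ultimately show "(\<Sum>k<n. C i k * C j k) = (if i = j then int n + 1 else 0) - 1" by simp
  next
    fix i assume i: "i < n"
    have "(\<Sum>k<n+1. H' (Suc i) k * H' 0 k) = H' (Suc i) 0 * H' 0 0 + (\<Sum>k<n. C i k * H' 0 (Suc k))"
      unfolding C_def by (simp add: sum.lessThan_Suc_shift del: sum.lessThan_Suc)
    also have "\<dots> = 1 + (\<Sum>k<n. C i k)"
      using H'0[of "Suc i"] H'r0 i by (simp)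
    finally have "(\<Sum>k<n+1. H' (Suc i) k * H' 0 k) = 1 + (\<Sum>k<n. C i k)" .
    moreover have "(\<Sum>k<n+1. H' (Suc i) k * H' 0 k) = 0" using H'orth[of "Suc i" 0] i by simp
    ultimately show "(\<Sum>k<n. C i k) = -1" by simp
  qed
  thus ?thesis by blast
qed

definition border :: "(nat \<Rightarrow> nat \<Rightarrow> int) \<Rightarrow> nat \<Rightarrow> nat \<Rightarrow> int" where
  "border C i j = (if i = 0 \<or> j = 0 then 1 else C (i - 1) (j - 1))"

lemma core_to_had:
  assumes "core n C"
  shows "hadamard_matrix (n+1) (border C)"
  unfolding hadamard_matrix_def
proof (intro conjI allI impI)
  fix i j assume "i < n+1" "j < n+1"
  thus "border C i j = 1 \<or> border C i j = -1"
  proof (cases "i = 0 \<or> j = 0")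
    case False
    hence "i - 1 < n" "j - 1 < n" using \<open>i < n+1\<close> \<open>j < n+1\<close> by auto
    thus ?thesis using assms False unfolding core_def border_def by auto
  qed (auto simp: border_def)
next
  fix i j assume ij: "i < n+1" "j < n+1" "i \<noteq> j"
  have rs: "\<And>i. i < n \<Longrightarrow> (\<Sum>k<n. C i k) = -1" using assms unfolding core_def by auto
  have cc: "\<And>i j. i < n \<Longrightarrow> j < n \<Longrightarrow> i \<noteq> j \<Longrightarrow> (\<Sum>k<n. C i k * C j k) = -1"
    using assms unfolding core_def by auto
  show "(\<Sum>k<n+1. border C i k * border C j k) = 0"
  proof (cases i)
    case 0
    then obtain j' where j: "j = Suc j'" using ij by (cases j) auto
    show ?thesis using rs[of j'] ij 0 j
      by (simp add: sum.lessThan_Suc_shift border_def del: sum.lessThan_Suc)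
  next
    case (Suc i')
    show ?thesis
    proof (cases j)
      case 0
      show ?thesis using rs[of i'] ij 0 Suc
        by (simp add: sum.lessThan_Suc_shift border_def del: sum.lessThan_Suc)
    next
      case (Suc j')
      show ?thesis using cc[of i' j'] ij \<open>i = Suc i'\<close> Suc
        by (simp add: sum.lessThan_Suc_shift border_def del: sum.lessThan_Suc)
    qed
  qed
qed




locale paley = field R for R (structure) +
  assumes fin: "finite (carrier R)"
    and q3: "card (carrier R) mod 4 = 3"
    and two: "\<one> \<oplus> \<one> \<noteq> \<zero>"
begin

abbreviation q where "q \<equiv> card (carrier R)"
definition mm where "mm = (q - 1) div 2"

definition chi :: "'a \<Rightarrow> int" where
  "chi x = (if x = \<zero> then 0 else if x [^] mm = \<one> then 1 else -1)"

lemma one_ne_mone: "\<one> \<noteq> \<ominus> \<one>"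
proof
  assume "\<one> = \<ominus> \<one>"
  hence "\<one> \<oplus> \<one> = \<one> \<oplus> \<ominus> \<one>" by simp
  thus False using two by (simp add: r_neg)
qed

lemma mm2: "2 * mm = q - 1" unfolding mm_def using q3 by presburger

lemma mm_odd: "odd mm" unfolding mm_def using q3 by presburger

lemma pow_q1: assumes "x \<in> carrier R" "x \<noteq> \<zero>" shows "x [^] (q - 1) = \<one>"
proof -
  interpret G: group "Multiplicative_Group.mult_of R" by (rule field_mult_group)
  have "x \<in> carrier (Multiplicative_Group.mult_of R)" using assms by simp
  hence "x [^]\<^bsub>Multiplicative_Group.mult_of R\<^esub> order (Multiplicative_Group.mult_of R) = \<one>\<^bsub>Multiplicative_Group.mult_of R\<^esub>" by (rule G.pow_order_eq_1)
  thus ?thesis using order_mult_of[OF fin] by (simp add: Multiplicative_Group.nat_pow_mult_of order_def)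
qed

lemma sq_one: assumes "y \<in> carrier R" "y \<otimes> y = \<one>" shows "y = \<one> \<or> y = \<ominus> \<one>"
proof -
  have "(y \<oplus> \<ominus> \<one>) \<otimes> (y \<oplus> \<one>) = y \<otimes> y \<oplus> \<ominus> \<one>"
    using assms(1) by algebra
  also have "\<dots> = \<zero>" using assms by (simp add: r_neg)
  finally have "y \<oplus> \<ominus> \<one> = \<zero> \<or> y \<oplus> \<one> = \<zero>" using assms(1) integral by blast
  thus ?thesis using assms(1)
    by (metis a_minus_def add.inv_closed minus_equality one_closed r_neg1 minus_minus)
qed

lemma pow_mm: assumes "x \<in> carrier R" "x \<noteq> \<zero>" shows "x [^] mm = \<one> \<or> x [^] mm = \<ominus> \<one>"
proof -
  have "x [^] mm \<otimes> x [^] mm = x [^] (q - 1)"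
    using assms mm2 by (simp add: nat_pow_mult mult_2[symmetric])
  thus ?thesis using sq_one pow_q1 assms by simp
qed

lemma chi_vals: assumes "x \<in> carrier R" "x \<noteq> \<zero>" shows "chi x = 1 \<or> chi x = -1"
  unfolding chi_def using assms by auto

lemma chi_sq: assumes "x \<in> carrier R" "x \<noteq> \<zero>" shows "chi x * chi x = 1"
  using chi_vals[OF assms] by auto

lemma chi_zero[simp]: "chi \<zero> = 0" unfolding chi_def by simp

lemma chi_one[simp]: "chi \<one> = 1" unfolding chi_def by simp

lemma chi_mult: assumes "x \<in> carrier R" "y \<in> carrier R" shows "chi (x \<otimes> y) = chi x * chi y"
proof (cases "x = \<zero> \<or> y = \<zero>")
  case True thus ?thesis using assms by auto
next
  case False
  hence nz: "x \<otimes> y \<noteq> \<zero>" using assms integral by blast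
  have e: "(x \<otimes> y) [^] mm = x [^] mm \<otimes> y [^] mm" using assms by (simp add: nat_pow_distrib)
  have mo: "\<ominus> \<one> \<otimes> \<ominus> \<one> = \<one>" by (simp add: l_minus r_minus)
  show ?thesis
    using pow_mm[of x] pow_mm[of y] False assms nz one_ne_mone mo
    unfolding chi_def e by auto
qed

lemma mone_pow_odd: "odd (n::nat) \<Longrightarrow> (\<ominus> \<one>) [^] n = \<ominus> \<one>"
proof -
  assume "odd n"
  then obtain k where k: "n = Suc (2 * k)" by (metis oddE Suc_eq_plus1)
  have "(\<ominus> \<one>) [^] (2::nat) = \<one>"
    by (simp add: numeral_2_eq_2 nat_pow_Suc l_minus r_minus)
  hence "(\<ominus> \<one>) [^] (2 * k) = \<one>"
    by (simp add: nat_pow_pow[symmetric])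
  thus ?thesis unfolding k by (simp add: nat_pow_Suc)
qed

lemma chi_mone: "chi (\<ominus> \<one>) = -1"
proof -
  have "\<ominus> \<one> \<noteq> \<zero>" by (metis minus_minus minus_zero one_closed zero_closed zero_not_one)
  thus ?thesis unfolding chi_def using mone_pow_odd[OF mm_odd] one_ne_mone by auto
qed

lemma chi_neg: assumes "x \<in> carrier R" shows "chi (\<ominus> x) = - chi x"
proof -
  have "\<ominus> x = \<ominus> \<one> \<otimes> x" using assms by (simp add: l_minus)
  thus ?thesis using chi_mult[of "\<ominus> \<one>" x] chi_mone assms by simp
qed

lemma sum_chi: "(\<Sum>x\<in>carrier R. chi x) = 0"
proof -
  have "(\<Sum>x\<in>carrier R. chi x) = (\<Sum>x\<in>carrier R. chi (\<ominus> x))"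
    by (rule sum.reindex_bij_witness[where i = "\<lambda>x. \<ominus> x" and j = "\<lambda>x. \<ominus> x"]) auto
  also have "\<dots> = - (\<Sum>x\<in>carrier R. chi x)" by (simp add: chi_neg sum_negf)
  finally show ?thesis by simp
qed

lemma sum_shift: assumes "a \<in> carrier R"
  shows "(\<Sum>y\<in>carrier R. f (y \<ominus> a)) = (\<Sum>u\<in>carrier R. f u)"
  by (rule sum.reindex_bij_witness[where i = "\<lambda>u. u \<oplus> a" and j = "\<lambda>y. y \<ominus> a"])
     (use assms in \<open>auto simp: a_minus_def a_assoc r_neg l_neg\<close>)

lemma chi_inv: assumes "x \<in> carrier R" "x \<noteq> \<zero>" shows "chi (inv x) = chi x"
proof -
  have u: "x \<in> Units R" using assms field_Units by auto
  have "chi x * chi (inv x) = 1" using chi_mult[of x "inv x"] u assms by simp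
  thus ?thesis using chi_vals[OF assms] by auto
qed

lemma inv_mult_units: assumes "x \<in> Units R" "y \<in> Units R" shows "inv (x \<otimes> y) = inv x \<otimes> inv y"
proof -
  have c: "x \<in> carrier R" "y \<in> carrier R" "inv x \<in> carrier R" "inv y \<in> carrier R" using assms by auto
  have "(x \<otimes> y) \<otimes> (inv x \<otimes> inv y) = (x \<otimes> inv x) \<otimes> (y \<otimes> inv y)"
    using c by (simp add: m_ac)
  also have "\<dots> = \<one>" using assms by simp
  finally show ?thesis using c by (intro comm_inv_char) auto
qed

lemma corr: assumes "e \<in> carrier R" "e \<noteq> \<zero>"
  shows "(\<Sum>u\<in>carrier R. chi u * chi (u \<oplus> e)) = -1"
proof -
  have fin': "finite (carrier R - {\<zero>})" using fin by simp
  have "(\<Sum>u\<in>carrier R. chi u * chi (u \<oplus> e)) = chi \<zero> * chi (\<zero> \<oplus> e) + (\<Sum>u\<in>carrier R - {\<zero>}. chi u * chi (u \<oplus> e))"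
    using fin by (simp add: sum.remove[of _ \<zero>])
  also have "\<dots> = (\<Sum>u\<in>carrier R - {\<zero>}. chi (\<one> \<oplus> e \<otimes> inv u))"
  proof (simp, rule sum.cong[OF refl])
    fix u assume u: "u \<in> carrier R - {\<zero>}"
    hence uu: "u \<in> Units R" using field_Units by auto
    have "inv u \<otimes> (u \<oplus> e) = inv u \<otimes> u \<oplus> inv u \<otimes> e" using uu assms
      by (intro r_distr) auto
    also have "\<dots> = \<one> \<oplus> e \<otimes> inv u" using uu assms
      by (simp add: Units_l_inv m_comm[of "inv u" e])
    finally have "inv u \<otimes> (u \<oplus> e) = \<one> \<oplus> e \<otimes> inv u" .
    hence "chi (\<one> \<oplus> e \<otimes> inv u) = chi (inv u) * chi (u \<oplus> e)"
      using chi_mult[of "inv u" "u \<oplus> e"] uu assms Units_closed[OF uu] by simp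
    thus "chi u * chi (u \<oplus> e) = chi (\<one> \<oplus> e \<otimes> inv u)" using chi_inv u by simp
  qed
  also have "\<dots> = (\<Sum>v\<in>carrier R - {\<one>}. chi v)"
  proof (rule sum.reindex_bij_witness[where i = "\<lambda>v. e \<otimes> inv (v \<ominus> \<one>)" and j = "\<lambda>u. \<one> \<oplus> e \<otimes> inv u"])
    fix v assume v: "v \<in> carrier R - {\<one>}"
    have nz: "v \<ominus> \<one> \<noteq> \<zero>" using v by (metis DiffD1 DiffD2 a_minus_def insertI1 one_closed r_neg1 add.inv_closed minus_minus r_zero add.m_comm minus_equality)
    have vu: "v \<ominus> \<one> \<in> Units R" using nz v field_Units by auto
    have ei: "e \<in> Units R" using assms field_Units by auto
    have "inv (e \<otimes> inv (v \<ominus> \<one>)) = (v \<ominus> \<one>) \<otimes> inv e"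
      using vu ei Units_closed[OF vu] Units_inv_closed[OF ei]
      by (simp add: inv_mult_units m_comm[of "inv e" "v \<ominus> \<one>"])
    hence "e \<otimes> inv (e \<otimes> inv (v \<ominus> \<one>)) = v \<ominus> \<one>" using vu ei Units_closed[OF vu] Units_closed[OF ei] Units_inv_closed[OF ei]
      by (simp add: m_lcomm[of e "v \<ominus> \<one>"])
    thus "\<one> \<oplus> e \<otimes> inv (e \<otimes> inv (v \<ominus> \<one>)) = v" using v by (simp add: a_minus_def add.m_lcomm r_neg)
    show "e \<otimes> inv (v \<ominus> \<one>) \<in> carrier R - {\<zero>}" using vu ei assms Units_inv_Units[OF vu] field_Units by (auto simp: integral_iff)
  next
    fix u assume u: "u \<in> carrier R - {\<zero>}"
    have uu: "u \<in> Units R" using u field_Units by auto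
    have ei: "e \<in> Units R" using assms field_Units by auto
    have w: "e \<otimes> inv u \<in> carrier R" using uu assms by simp
    have w1: "\<one> \<oplus> e \<otimes> inv u \<ominus> \<one> = e \<otimes> inv u" using w by algebra
    hence "inv (\<one> \<oplus> e \<otimes> inv u \<ominus> \<one>) = inv (e \<otimes> inv u)" by simp
    also have "\<dots> = u \<otimes> inv e" using uu ei Units_closed[OF uu] Units_inv_closed[OF ei]
      by (simp add: inv_mult_units m_comm[of "inv e" u])
    finally show "e \<otimes> inv (\<one> \<oplus> e \<otimes> inv u \<ominus> \<one>) = u" using uu ei Units_closed[OF uu] Units_closed[OF ei] Units_inv_closed[OF ei]
      by (simp add: m_lcomm[of e u])
    have "e \<otimes> inv u \<noteq> \<zero>" using uu ei assms Units_inv_Units[OF uu] field_Units by (auto simp: integral_iff)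
    moreover have "\<one> \<oplus> e \<otimes> inv u \<noteq> \<one>"
    proof
      assume h: "\<one> \<oplus> e \<otimes> inv u = \<one>"
      have "e \<otimes> inv u = \<one> \<ominus> \<one>" using w1 h by simp
      thus False using \<open>e \<otimes> inv u \<noteq> \<zero>\<close> by (simp add: a_minus_def r_neg)
    qed
    ultimately show "\<one> \<oplus> e \<otimes> inv u \<in> carrier R - {\<one>}" using w by simp
  qed simp
  also have "\<dots> = (\<Sum>v\<in>carrier R. chi v) - chi \<one>"
    using fin by (simp add: sum_diff1)
  also have "\<dots> = -1" using sum_chi by simp
  finally show ?thesis .
qed

end



context paley begin

lemma sum_chi_sq: "(\<Sum>u\<in>carrier R. chi u * chi u) = int q - 1"
proof -
  have "(\<Sum>u\<in>carrier R. chi u * chi u) = chi \<zero> * chi \<zero> + (\<Sum>u\<in>carrier R - {\<zero>}. chi u * chi u)"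
    using fin by (simp add: sum.remove[of _ \<zero>])
  also have "\<dots> = (\<Sum>u\<in>carrier R - {\<zero>}. 1)" using chi_sq by simp
  also have "\<dots> = int q - 1"
  proof -
    have "q > 0" using fin by (metis card_gt_0_iff empty_iff zero_closed)
    thus ?thesis using fin by (simp add: card_Diff_singleton of_nat_diff)
  qed
  finally show ?thesis .
qed

lemma paley_core:
  assumes e: "bij_betw e {..<q} (carrier R)"
  shows "core q (\<lambda>i j. chi (e j \<ominus> e i) - (if i = j then 1 else 0))"
proof -
  have ec: "\<And>k. k < q \<Longrightarrow> e k \<in> carrier R" using e bij_betw_apply by fastforce
  have ei: "\<And>k l. k < q \<Longrightarrow> l < q \<Longrightarrow> e k = e l \<Longrightarrow> k = l"
    using e unfolding bij_betw_def inj_on_def by auto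
  have reidx: "\<And>f. (\<Sum>k<q. f (e k)) = (\<Sum>y\<in>carrier R. f y)"
    using sum.reindex_bij_betw[OF e] by blast
  show ?thesis unfolding core_def
  proof (intro conjI allI impI)
    fix i j assume ij: "i < q" "j < q"
    show "chi (e j \<ominus> e i) - (if i = j then 1 else 0) = 1 \<or> chi (e j \<ominus> e i) - (if i = j then 1 else 0) = -1"
    proof (cases "i = j")
      case True thus ?thesis using ec[OF ij(1)] by (simp add: r_neg a_minus_def)
    next
      case False
      hence "e j \<ominus> e i \<noteq> \<zero>" using ei ij ec by auto
      thus ?thesis using chi_vals[of "e j \<ominus> e i"] ec ij False by auto
    qed
  next
    fix i j assume ij: "i < q" "j < q"
    define x where "x = e i"
    define x' where "x' = e j"
    have xc: "x \<in> carrier R" "x' \<in> carrier R" using ec ij unfolding x_def x'_def by auto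
    have "(\<Sum>k<q. (chi (e k \<ominus> e i) - (if i = k then 1 else 0)) * (chi (e k \<ominus> e j) - (if j = k then 1 else 0)))
        = (\<Sum>k<q. chi (e k \<ominus> x) * chi (e k \<ominus> x')) - (\<Sum>k<q. (if i = k then chi (e k \<ominus> x') else 0))
          - (\<Sum>k<q. (if j = k then chi (e k \<ominus> x) else 0)) + (\<Sum>k<q. (if i = k \<and> j = k then 1 else 0))"
    proof -
      have "(\<Sum>k<q. (chi (e k \<ominus> e i) - (if i = k then 1 else 0)) * (chi (e k \<ominus> e j) - (if j = k then 1 else 0)))
         = (\<Sum>k<q. chi (e k \<ominus> x) * chi (e k \<ominus> x') - (if i = k then chi (e k \<ominus> x') else 0)
            - (if j = k then chi (e k \<ominus> x) else 0) + (if i = k \<and> j = k then 1 else 0))"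
        unfolding x_def x'_def by (intro sum.cong) (auto simp: algebra_simps)
      thus ?thesis by (simp add: sum.distrib sum_subtractf)
    qed
    also have "\<dots> = (\<Sum>y\<in>carrier R. chi (y \<ominus> x) * chi (y \<ominus> x')) - chi (x \<ominus> x') - chi (x' \<ominus> x) + (if i = j then 1 else 0)"
    proof -
      have "(\<Sum>k<q. (if i = k \<and> j = k then 1 else 0)) = (if i = j then (1::int) else 0)"
      proof (cases "i = j")
        case False
        hence "\<And>k. (if i = k \<and> j = k then (1::int) else 0) = 0" by auto
        thus ?thesis using False by simp
      qed (use ij in auto)
      thus ?thesis using ij unfolding x_def x'_def
        by (simp add: reidx[of "\<lambda>y. chi (y \<ominus> e i) * chi (y \<ominus> e j)"])
    qed
    also have "(\<Sum>y\<in>carrier R. chi (y \<ominus> x) * chi (y \<ominus> x')) = (\<Sum>y\<in>carrier R. chi (y \<ominus> x) * chi ((y \<ominus> x) \<oplus> (x \<ominus> x')))"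
    proof (rule sum.cong[OF refl])
      fix y assume y: "y \<in> carrier R"
      have "y \<ominus> x' = (y \<ominus> x) \<oplus> (x \<ominus> x')" using y xc by algebra
      thus "chi (y \<ominus> x) * chi (y \<ominus> x') = chi (y \<ominus> x) * chi ((y \<ominus> x) \<oplus> (x \<ominus> x'))" by simp
    qed
    also have "\<dots> = (\<Sum>u\<in>carrier R. chi u * chi (u \<oplus> (x \<ominus> x')))"
      by (rule sum_shift[OF xc(1)])
    finally have S: "(\<Sum>k<q. (chi (e k \<ominus> e i) - (if i = k then 1 else 0)) * (chi (e k \<ominus> e j) - (if j = k then 1 else 0)))
       = (\<Sum>u\<in>carrier R. chi u * chi (u \<oplus> (x \<ominus> x'))) - chi (x \<ominus> x') - chi (x' \<ominus> x) + (if i = j then 1 else 0)" .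
    show "(\<Sum>k<q. (chi (e k \<ominus> e i) - (if i = k then 1 else 0)) * (chi (e k \<ominus> e j) - (if j = k then 1 else 0)))
       = (if i = j then int q + 1 else 0) - 1"
    proof (cases "i = j")
      case True
      hence xx: "x = x'" unfolding x_def x'_def by simp
      have "x \<ominus> x' = \<zero>" using xx xc by (simp add: a_minus_def r_neg)
      hence "(\<Sum>u\<in>carrier R. chi u * chi (u \<oplus> (x \<ominus> x'))) = (\<Sum>u\<in>carrier R. chi u * chi u)"
        by (intro sum.cong) auto
      thus ?thesis using S True sum_chi_sq \<open>x \<ominus> x' = \<zero>\<close> xx by simp
    next
      case False
      have d: "x \<ominus> x' \<noteq> \<zero>" using False ei ij xc unfolding x_def x'_def by auto
      have dc: "x \<ominus> x' \<in> carrier R" using xc by simp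
      have "x' \<ominus> x = \<ominus> (x \<ominus> x')" using xc by algebra
      hence "chi (x' \<ominus> x) = - chi (x \<ominus> x')" using chi_neg[OF dc] by simp
      thus ?thesis using S corr[OF dc d] False by simp
    qed
  next
    fix i assume i: "i < q"
    have "(\<Sum>k<q. chi (e k \<ominus> e i) - (if i = k then 1 else 0)) = (\<Sum>k<q. chi (e k \<ominus> e i)) - (\<Sum>k<q. (if i = k then 1 else 0))"
      by (simp add: sum_subtractf)
    also have "\<dots> = (\<Sum>y\<in>carrier R. chi (y \<ominus> e i)) - 1"
      using i by (simp add: reidx[of "\<lambda>y. chi (y \<ominus> e i)"])
    also have "\<dots> = -1" using sum_shift[OF ec[OF i], of chi] sum_chi by simp
    finally show "(\<Sum>k<q. chi (e k \<ominus> e i) - (if i = k then 1 else 0)) = -1" .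
  qed
qed

lemma paley_exists: "\<exists>C. core q C"
proof -
  obtain e where "bij_betw e {..<q} (carrier R)"
    using fin by (metis bij_betw_from_nat_into_finite lessThan_atLeast0)
  thus ?thesis using paley_core by blast
qed

end



lemma prime_core_circ:
  assumes p: "prime p" and p3: "p mod 4 = 3"
  shows "\<exists>C. core p C \<and> circ_int p C"
proof -
  interpret RP: residues_prime p "residue_ring (int p)" by (unfold_locales) (use p in auto)
  have p3': "p \<ge> 3" using p3 p prime_gt_1_nat by presburger
  have cardc: "card (carrier (residue_ring (int p))) = p"
    by (simp add: RP.res_carrier_eq)
  interpret P: paley "residue_ring (int p)"
  proof (unfold_locales)
    show "finite (carrier (residue_ring (int p)))" by simp
    show "card (carrier (residue_ring (int p))) mod 4 = 3" using cardc p3 by simp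
    show "\<one>\<^bsub>residue_ring (int p)\<^esub> \<oplus>\<^bsub>residue_ring (int p)\<^esub> \<one>\<^bsub>residue_ring (int p)\<^esub> \<noteq> \<zero>\<^bsub>residue_ring (int p)\<^esub>"
    proof -
      have "(2::int) mod int p = 2" using p3' by (intro mod_pos_pos_trivial) auto
      thus ?thesis unfolding RP.res_add_eq RP.res_one_eq RP.res_zero_eq by simp
    qed
  qed
  define e where "e k = int k" for k
  have bij0: "bij_betw int {..<p} {0..int p - 1}"
  proof (rule bij_betw_byWitness[where f' = nat])
    show "\<forall>a\<in>{..<p}. nat (int a) = a" by simp
    show "\<forall>a'\<in>{0..int p - 1}. int (nat a') = a'" by simp
    show "int ` {..<p} \<subseteq> {0..int p - 1}" by auto
    show "nat ` {0..int p - 1} \<subseteq> {..<p}" by auto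
  qed
  have bij: "bij_betw e {..<P.q} (carrier (residue_ring (int p)))"
    using bij0 unfolding cardc RP.res_carrier_eq e_def[abs_def] by simp
  define C where "C i j = P.chi (e j \<ominus>\<^bsub>residue_ring (int p)\<^esub> e i) - (if i = j then 1 else 0)" for i j
  have core: "core p C" using P.paley_core[OF bij] unfolding C_def cardc .
  have diff: "e j \<ominus>\<^bsub>residue_ring (int p)\<^esub> e i = (int j - int i) mod int p" if "i < p" "j < p" for i j
    using that unfolding e_def a_minus_def RP.res_add_eq RP.res_neg_eq by (simp add: mod_add_right_eq)
  have eq0: "i = j \<longleftrightarrow> (int j - int i) mod int p = 0" if "i < p" "j < p" for i j
  proof
    assume "(int j - int i) mod int p = 0"
    then have "int p dvd (int j - int i)" by auto
    moreover have "\<bar>int j - int i\<bar> < int p" using that by auto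
    ultimately show "i = j" using dvd_imp_le_int[of "int j - int i" "int p"] by (cases "int j - int i = 0") auto
  qed simp
  have "circ_int p C" unfolding circ_int_def
  proof (intro allI impI)
    fix i j i' j' assume a: "i < p" "j < p" "i' < p" "j' < p" "(int j - int i) mod int p = (int j' - int i') mod int p"
    show "C i j = C i' j'" unfolding C_def using diff[of i j] diff[of i' j'] eq0[of i j] eq0[of i' j'] a by simp
  qed
  thus ?thesis using core by blast
qed




context cring begin

lemma add_pow_closed': "x \<in> carrier R \<Longrightarrow> [(n::nat)] \<cdot> x \<in> carrier R"
  by (rule add.nat_pow_closed)

lemma binom:
  assumes x: "x \<in> carrier R" and y: "y \<in> carrier R"
  shows "(x \<oplus> y) [^] (n::nat) = (\<Oplus>k\<in>{..n}. [(n choose k)] \<cdot> (x [^] k \<otimes> y [^] (n - k)))"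
proof (induction n)
  case 0
  show ?case using x y by simp
next
  case (Suc n)
  define S where "S = (\<Oplus>k\<in>{..n}. [(n choose k)] \<cdot> (x [^] k \<otimes> y [^] (n - k)))"
  have Sc: "S \<in> carrier R" unfolding S_def using x y by (intro finsum_closed) auto
  have Sx: "S \<otimes> x = (\<Oplus>k\<in>{..n}. [(n choose k)] \<cdot> (x [^] Suc k \<otimes> y [^] (n - k)))"
  proof -
    have "S \<otimes> x = (\<Oplus>k\<in>{..n}. [(n choose k)] \<cdot> (x [^] k \<otimes> y [^] (n - k)) \<otimes> x)"
      unfolding S_def using x y by (intro finsum_ldistr) auto
    also have "\<dots> = (\<Oplus>k\<in>{..n}. [(n choose k)] \<cdot> (x [^] Suc k \<otimes> y [^] (n - k)))"
    proof (intro finsum_cong')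
      fix k assume "k \<in> {..n}"
      have "[(n choose k)] \<cdot> (x [^] k \<otimes> y [^] (n - k)) \<otimes> x = [(n choose k)] \<cdot> ((x [^] k \<otimes> y [^] (n - k)) \<otimes> x)"
        using x y by (intro add_pow_ldistr) auto
      also have "(x [^] k \<otimes> y [^] (n - k)) \<otimes> x = x [^] Suc k \<otimes> y [^] (n - k)"
        using x y by (simp add: m_ac)
      finally show "[(n choose k)] \<cdot> (x [^] k \<otimes> y [^] (n - k)) \<otimes> x = [(n choose k)] \<cdot> (x [^] Suc k \<otimes> y [^] (n - k))" .
    qed (use x y in auto)
    finally show ?thesis .
  qed
  define g where "g k = [(n choose k)] \<cdot> (x [^] k \<otimes> y [^] (Suc n - k))" for k
  have gc: "g \<in> A \<rightarrow> carrier R" for A unfolding g_def using x y by auto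
  have Sy: "S \<otimes> y = (\<Oplus>i\<in>{..n}. g (Suc i)) \<oplus> y [^] Suc n"
  proof -
    have "S \<otimes> y = (\<Oplus>k\<in>{..n}. [(n choose k)] \<cdot> (x [^] k \<otimes> y [^] (n - k)) \<otimes> y)"
      unfolding S_def using x y by (intro finsum_ldistr) auto
    also have "\<dots> = (\<Oplus>k\<in>{..n}. g k)"
    proof (intro finsum_cong')
      fix k assume k: "k \<in> {..n}"
      have "[(n choose k)] \<cdot> (x [^] k \<otimes> y [^] (n - k)) \<otimes> y = [(n choose k)] \<cdot> ((x [^] k \<otimes> y [^] (n - k)) \<otimes> y)"
        using x y by (intro add_pow_ldistr) auto
      also have "(x [^] k \<otimes> y [^] (n - k)) \<otimes> y = x [^] k \<otimes> y [^] (Suc n - k)"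
        using x y k by (simp add: m_ac Suc_diff_le)
      finally show "[(n choose k)] \<cdot> (x [^] k \<otimes> y [^] (n - k)) \<otimes> y = g k" unfolding g_def .
    qed (use gc in auto)
    also have "\<dots> = g (Suc n) \<oplus> (\<Oplus>k\<in>{..n}. g k)"
    proof -
      have c0: "n choose Suc n = 0" by (simp add: binomial_eq_0)
      have "g (Suc n) = \<zero>" unfolding g_def c0 by simp
      thus ?thesis using gc[of "{..n}"] by (simp add: finsum_closed)
    qed
    also have "\<dots> = (\<Oplus>k\<in>{..Suc n}. g k)" using gc by simp
    also have "\<dots> = (\<Oplus>i\<in>{..n}. g (Suc i)) \<oplus> g 0" using gc by (intro finsum_Suc2) auto
    also have "g 0 = y [^] Suc n" unfolding g_def using y by simp
    finally show ?thesis .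
  qed
  define h where "h k = [(Suc n choose k)] \<cdot> (x [^] k \<otimes> y [^] (Suc n - k))" for k
  have hc: "h \<in> A \<rightarrow> carrier R" for A unfolding h_def using x y by auto
  have "(\<Oplus>k\<in>{..Suc n}. h k) = (\<Oplus>i\<in>{..n}. h (Suc i)) \<oplus> h 0"
    using hc by (intro finsum_Suc2) auto
  also have "(\<Oplus>i\<in>{..n}. h (Suc i)) = (\<Oplus>i\<in>{..n}. [(n choose i)] \<cdot> (x [^] Suc i \<otimes> y [^] (n - i)) \<oplus> g (Suc i))"
  proof (intro finsum_cong')
    fix i assume "i \<in> {..n}"
    show "h (Suc i) = [(n choose i)] \<cdot> (x [^] Suc i \<otimes> y [^] (n - i)) \<oplus> g (Suc i)"
      unfolding h_def g_def using x y by (simp add: add.nat_pow_mult)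
  qed (use x y gc in \<open>auto intro!: add.m_closed\<close>)
  also have "\<dots> = S \<otimes> x \<oplus> (\<Oplus>i\<in>{..n}. g (Suc i))"
    unfolding Sx using x y gc by (intro finsum_addf) auto
  also have "h 0 = y [^] Suc n" unfolding h_def using y by simp
  finally have "(\<Oplus>k\<in>{..Suc n}. h k) = S \<otimes> x \<oplus> (\<Oplus>i\<in>{..n}. g (Suc i)) \<oplus> y [^] Suc n" .
  also have "\<dots> = S \<otimes> x \<oplus> S \<otimes> y"
  proof -
    have fs: "(\<Oplus>i\<in>{..n}. g (Suc i)) \<in> carrier R" using gc by (intro finsum_closed) auto
    show ?thesis unfolding Sy using x y Sc fs by (simp add: a_assoc)
  qed
  also have "\<dots> = S \<otimes> (x \<oplus> y)" using x y Sc by (simp add: r_distr)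
  also have "\<dots> = (x \<oplus> y) [^] Suc n" using Suc.IH S_def x y by simp
  finally show ?case unfolding h_def by simp
qed

lemma frob:
  assumes x: "x \<in> carrier R" and y: "y \<in> carrier R" and p: "prime (p::nat)" and ch: "[p] \<cdot> \<one> = \<zero>"
  shows "(x \<oplus> y) [^] p = x [^] p \<oplus> y [^] p"
proof -
  have p2: "p \<ge> 2" using p prime_ge_2_nat by auto
  have zero: "[(p choose k)] \<cdot> z = \<zero>" if kk: "0 < k" "k < p" "z \<in> carrier R" for k z
  proof -
    obtain m where m: "p choose k = p * m" using dvd_choose_prime[of k p] kk p prime_gt_0_nat by (auto elim!: dvdE)
    have "[p] \<cdot> z = [p] \<cdot> (\<one> \<otimes> z)" using kk by simp
    also have "\<dots> = ([p] \<cdot> \<one>) \<otimes> z" using kk by (simp add: add_pow_ldistr)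
    also have "\<dots> = \<zero>" using ch kk by simp
    finally have "[p] \<cdot> z = \<zero>" .
    hence "[m] \<cdot> ([p] \<cdot> z) = \<zero>" by simp
    thus ?thesis using m kk by (simp add: add.nat_pow_pow mult.commute)
  qed
  define f where "f k = [(p choose k)] \<cdot> (x [^] k \<otimes> y [^] (p - k))" for k
  have fc: "f \<in> A \<rightarrow> carrier R" for A unfolding f_def using x y by auto
  obtain m where pm: "p = Suc (Suc m)" using p2 by (metis add_2_eq_Suc le_iff_add)
  have "(x \<oplus> y) [^] p = (\<Oplus>k\<in>{..Suc (Suc m)}. f k)" unfolding f_def using binom[OF x y, of p] pm by (simp only:)
  also have "\<dots> = f (Suc (Suc m)) \<oplus> (\<Oplus>k\<in>{..Suc m}. f k)" using fc by simp
  also have "(\<Oplus>k\<in>{..Suc m}. f k) = (\<Oplus>i\<in>{..m}. f (Suc i)) \<oplus> f 0" using fc by (intro finsum_Suc2) auto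
  also have "(\<Oplus>i\<in>{..m}. f (Suc i)) = (\<Oplus>i\<in>{..m}. \<zero>)"
  proof (intro finsum_cong')
    fix i assume "i \<in> {..m}"
    hence "0 < Suc i" "Suc i < p" using pm by auto
    thus "f (Suc i) = \<zero>" unfolding f_def using x y zero by auto
  qed auto
  also have "f (Suc (Suc m)) = x [^] p" unfolding f_def using x y pm by simp
  also have "f 0 = y [^] p" unfolding f_def using y by simp
  finally show ?thesis using x y by simp
qed

lemma frob_pow:
  assumes x: "x \<in> carrier R" and y: "y \<in> carrier R" and p: "prime (p::nat)" and ch: "[p] \<cdot> \<one> = \<zero>"
  shows "(x \<oplus> y) [^] (p ^ k) = x [^] (p ^ k) \<oplus> y [^] (p ^ k)"
proof (induction k)
  case 0 thus ?case using x y by (simp add: One_nat_def del: One_nat_def[symmetric])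
next
  case (Suc k)
  have "(x \<oplus> y) [^] (p ^ Suc k) = ((x \<oplus> y) [^] (p ^ k)) [^] p"
    using x y by (simp add: nat_pow_pow mult.commute)
  also have "\<dots> = (x [^] (p ^ k) \<oplus> y [^] (p ^ k)) [^] p" using Suc by simp
  also have "\<dots> = (x [^] (p ^ k)) [^] p \<oplus> (y [^] (p ^ k)) [^] p" using x y p ch by (intro frob) auto
  also have "\<dots> = x [^] (p ^ Suc k) \<oplus> y [^] (p ^ Suc k)" using x y by (simp add: nat_pow_pow mult.commute)
  finally show ?case .
qed

end



primrec tel :: "('a, 'b) ring_scheme \<Rightarrow> 'a \<Rightarrow> 'a \<Rightarrow> nat \<Rightarrow> 'a" where
  "tel R x y 0 = \<zero>\<^bsub>R\<^esub>"
| "tel R x y (Suc n) = x [^]\<^bsub>R\<^esub> n \<oplus>\<^bsub>R\<^esub> y \<otimes>\<^bsub>R\<^esub> tel R x y n"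

context cring begin

lemma tel_closed: "x \<in> carrier R \<Longrightarrow> y \<in> carrier R \<Longrightarrow> tel R x y n \<in> carrier R"
  by (induction n) auto

lemma tel_mult:
  assumes x: "x \<in> carrier R" and y: "y \<in> carrier R"
  shows "(x \<ominus> y) \<otimes> tel R x y n = x [^] n \<ominus> y [^] n"
proof (induction n)
  case 0 show ?case using x y by (simp add: r_neg a_minus_def)
next
  case (Suc n)
  define T where "T = tel R x y n"
  define z where "z = x [^] n"
  define w where "w = y [^] n"
  have c: "T \<in> carrier R" "z \<in> carrier R" "w \<in> carrier R" unfolding T_def z_def w_def using x y tel_closed by auto
  have IH: "(x \<ominus> y) \<otimes> T = z \<ominus> w" using Suc unfolding T_def z_def w_def .
  have "(x \<ominus> y) \<otimes> tel R x y (Suc n) = (x \<ominus> y) \<otimes> z \<oplus> y \<otimes> ((x \<ominus> y) \<otimes> T)"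
  proof -
    have "(x \<ominus> y) \<otimes> (z \<oplus> y \<otimes> T) = (x \<ominus> y) \<otimes> z \<oplus> y \<otimes> ((x \<ominus> y) \<otimes> T)"
      using x y c by algebra
    thus ?thesis unfolding T_def z_def by simp
  qed
  also have "\<dots> = (x \<ominus> y) \<otimes> z \<oplus> y \<otimes> (z \<ominus> w)" using IH by simp
  also have "\<dots> = z \<otimes> x \<ominus> w \<otimes> y" using x y c by algebra
  finally show ?case unfolding z_def w_def by simp
qed

lemma tel_aa:
  assumes a: "a \<in> carrier R"
  shows "a \<otimes> tel R a a n = [n] \<cdot> (a [^] n)"
proof (induction n)
  case 0 show ?case using a by simp
next
  case (Suc n)
  define T where "T = tel R a a n"
  define z where "z = a [^] n"
  have c: "T \<in> carrier R" "z \<in> carrier R" unfolding T_def z_def using a tel_closed by auto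
  have "a \<otimes> tel R a a (Suc n) = z \<otimes> a \<oplus> a \<otimes> (a \<otimes> T)"
  proof -
    have "a \<otimes> (z \<oplus> a \<otimes> T) = z \<otimes> a \<oplus> a \<otimes> (a \<otimes> T)"
      using a c by algebra
    thus ?thesis unfolding T_def z_def by simp
  qed
  also have "\<dots> = z \<otimes> a \<oplus> a \<otimes> [n] \<cdot> z" using Suc unfolding T_def z_def by simp
  also have "\<dots> = z \<otimes> a \<oplus> [n] \<cdot> (z \<otimes> a)" using a c by (simp add: add_pow_rdistr m_comm)
  also have "\<dots> = [Suc n] \<cdot> (z \<otimes> a)" using a c by (simp add: add.m_comm)
  finally show ?case unfolding z_def by simp
qed

lemma tel_zero: "tel R \<zero> \<zero> (Suc (Suc n)) = \<zero>"
  by (simp add: nat_pow_zero tel_closed)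

end

lemma (in ring_hom_ring) tel_hom:
  assumes "x \<in> carrier R" "y \<in> carrier R"
  shows "h (tel R x y n) = tel S (h x) (h y) n"
proof (induction n)
  case 0 show ?case by simp
next
  case (Suc n)
  have c: "tel R x y n \<in> carrier R"
    using assms by (induction n) auto
  show ?case using Suc assms c by (simp add: hom_nat_pow)
qed




locale charp_closed = algebraically_closed L for L (structure) +
  fixes p :: nat
  assumes p_prime: "prime p" and ch: "[p] \<cdot> \<one> = \<zero>"
begin

lemma P_dom: "domain (poly_ring L)" by (rule univ_poly_is_domain[OF carrier_is_subring])

lemma q_ch: "k > 0 \<Longrightarrow> z \<in> carrier L \<Longrightarrow> [(p ^ k)] \<cdot> z = \<zero>"
proof -
  assume k: "k > 0" and z: "z \<in> carrier L"
  have "[(p ^ k)] \<cdot> \<one> = [(p * p ^ (k - 1))] \<cdot> \<one>" using k by (simp add: power_eq_if)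
  also have "\<dots> = [(p ^ (k - 1))] \<cdot> ([p] \<cdot> \<one>)" by (simp add: add.nat_pow_pow)
  also have "\<dots> = \<zero>" using ch by simp
  finally have "[(p ^ k)] \<cdot> \<one> = \<zero>" .
  hence "([(p ^ k)] \<cdot> \<one>) \<otimes> z = \<zero>" using z by simp
  thus ?thesis using z by (simp add: add_pow_ldistr)
qed

lemma poly_const_eval: "a \<in> carrier L \<Longrightarrow> x \<in> carrier L \<Longrightarrow> eval (poly_of_const a) x = a"
  by (cases "a = \<zero>") (auto simp: poly_of_const_def)

lemma poly_const_carrier: "a \<in> carrier L \<Longrightarrow> poly_of_const a \<in> carrier (poly_ring L)"
  using canonical_embedding_is_hom[OF carrier_is_subring] ring_hom_closed by fastforce

lemma lin_eq: assumes a: "a \<in> carrier L"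
  shows "var L \<ominus>\<^bsub>poly_ring L\<^esub> poly_of_const a = [\<one>, \<ominus> a]"
proof -
  have "\<ominus>\<^bsub>poly_ring L\<^esub> poly_of_const a = map (\<lambda>b. \<ominus> b) (poly_of_const a)"
    by (rule univ_poly_a_inv_def'[OF carrier_is_subring poly_const_carrier[OF a]])
  thus ?thesis using a unfolding a_minus_def univ_poly_add var_def poly_of_const_def
    by (cases "a = \<zero>") auto
qed

lemma card_S:
  assumes k: "k > 0"
  shows "card {x \<in> carrier L. x [^] (p ^ k) = x} = p ^ k"
proof -
  define q where "q = p ^ k"
  have p2: "p \<ge> 2" using p_prime prime_ge_2_nat by auto
  have q2: "q \<ge> 2" unfolding q_def using p2 k
    using self_le_power[of p k] by simp
  interpret UP: domain "poly_ring L" by (rule P_dom)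
  have Xc: "var L \<in> carrier (poly_ring L)" by (rule var_closed(1)[OF carrier_is_subring])
  define f where "f = (var L [^]\<^bsub>poly_ring L\<^esub> q) \<ominus>\<^bsub>poly_ring L\<^esub> var L"
  have fc: "f \<in> carrier (poly_ring L)" unfolding f_def using Xc by simp
  have evf: "eval f a = a [^] q \<ominus> a" if a: "a \<in> carrier L" for a
  proof -
    interpret H: ring_hom_ring "poly_ring L" L "\<lambda>p. eval p a"
      by (rule eval_ring_hom[OF carrier_is_subring a])
    show ?thesis unfolding f_def a_minus_def using Xc a
      by (simp add: H.hom_nat_pow eval_var)
  qed
  have degf: "degree f = q"
  proof -
    have e1: "var L [^]\<^bsub>poly_ring L\<^esub> q = monom \<one> q"
      by (rule unitary_monom_eq_var_pow[OF carrier_is_subring, symmetric])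
    have m1: "polynomial (carrier L) (monom \<one> q)" by (intro monom_is_polynomial[OF carrier_is_subring]) auto
    have nX: "\<ominus>\<^bsub>poly_ring L\<^esub> var L \<in> carrier (poly_ring L)" using Xc by simp
    hence m2: "polynomial (carrier L) (\<ominus>\<^bsub>poly_ring L\<^esub> var L)" by (simp add: univ_poly_carrier)
    have d2: "degree (\<ominus>\<^bsub>poly_ring L\<^esub> var L) = 1"
      using univ_poly_a_inv_degree[OF carrier_is_subring Xc] by (simp add: var_def)
    have d1: "degree (monom \<one> q) = q" by (simp add: monom_def)
    have "f = poly_add (monom \<one> q) (\<ominus>\<^bsub>poly_ring L\<^esub> var L)"
      unfolding f_def a_minus_def e1 univ_poly_add by simp
    thus ?thesis using poly_add_degree_eq[OF carrier_is_subring m1 m2] d1 d2 q2 by simp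
  qed
  have fne: "f \<noteq> []" using degf q2 by auto
  have spl: "size (roots f) = q" using roots_over_carrier[OF fc] degf unfolding splitted_def by simp
  have isr: "is_root f x \<longleftrightarrow> x \<in> carrier L \<and> x [^] q = x" for x
    unfolding is_root_def using evf fne by auto
  have mult1: "alg_mult f a \<le> 1" if a: "a \<in> carrier L" and aq: "a [^] q = a" for a
  proof (rule ccontr)
    assume "\<not> alg_mult f a \<le> 1"
    hence "2 \<le> alg_mult f a" by simp
    hence "([\<one>, \<ominus> a] [^]\<^bsub>poly_ring L\<^esub> (2::nat)) pdivides f"
      by (rule le_alg_mult_imp_pdivides[OF a fc])
    define A where "A = poly_of_const a"
    define lin where "lin = var L \<ominus>\<^bsub>poly_ring L\<^esub> A"
    have Ac: "A \<in> carrier (poly_ring L)" unfolding A_def using a by (rule poly_const_carrier)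
    have linc: "lin \<in> carrier (poly_ring L)" unfolding lin_def using Ac Xc by simp
    have lin_eq': "lin = [\<one>, \<ominus> a]" unfolding lin_def A_def by (rule lin_eq[OF a])
    obtain c where c: "c \<in> carrier (poly_ring L)" and fc2: "f = (lin \<otimes>\<^bsub>poly_ring L\<^esub> lin) \<otimes>\<^bsub>poly_ring L\<^esub> c"
      using \<open>([\<one>, \<ominus> a] [^]\<^bsub>poly_ring L\<^esub> (2::nat)) pdivides f\<close> linc
      unfolding pdivides_def factor_def lin_eq'[symmetric]
      by (auto simp: numeral_2_eq_2)
    define T where "T = tel (poly_ring L) (var L) A q"
    have Tc: "T \<in> carrier (poly_ring L)" unfolding T_def using Xc Ac by (rule UP.tel_closed)
    define g where "g = T \<ominus>\<^bsub>poly_ring L\<^esub> \<one>\<^bsub>poly_ring L\<^esub>"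
    have gc: "g \<in> carrier (poly_ring L)" unfolding g_def using Tc by simp
    have Aq: "A [^]\<^bsub>poly_ring L\<^esub> q = A"
    proof -
      interpret E: ring_hom_ring "L\<lparr>carrier := carrier L\<rparr>" "poly_ring L" poly_of_const
        by (rule canonical_embedding_ring_hom[OF carrier_is_subring])
      have "poly_of_const (a [^]\<^bsub>L\<lparr>carrier := carrier L\<rparr>\<^esub> q) = poly_of_const a [^]\<^bsub>poly_ring L\<^esub> q"
        using a by (intro E.hom_nat_pow) simp
      moreover have "a [^]\<^bsub>L\<lparr>carrier := carrier L\<rparr>\<^esub> q = a [^] q" by (simp add: nat_pow_def)
      ultimately show ?thesis unfolding A_def using aq by simp
    qed
    have "lin \<otimes>\<^bsub>poly_ring L\<^esub> T = var L [^]\<^bsub>poly_ring L\<^esub> q \<ominus>\<^bsub>poly_ring L\<^esub> A"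
      unfolding lin_def T_def using UP.tel_mult[OF Xc Ac, of q] Aq by simp
    hence flg: "f = lin \<otimes>\<^bsub>poly_ring L\<^esub> g"
    proof -
      assume h: "lin \<otimes>\<^bsub>poly_ring L\<^esub> T = var L [^]\<^bsub>poly_ring L\<^esub> q \<ominus>\<^bsub>poly_ring L\<^esub> A"
      define Y where "Y = var L [^]\<^bsub>poly_ring L\<^esub> q"
      have Yc: "Y \<in> carrier (poly_ring L)" unfolding Y_def using Xc by simp
      have "lin \<otimes>\<^bsub>poly_ring L\<^esub> g = lin \<otimes>\<^bsub>poly_ring L\<^esub> T \<ominus>\<^bsub>poly_ring L\<^esub> lin"
        unfolding g_def using linc Tc by algebra
      also have "\<dots> = (Y \<ominus>\<^bsub>poly_ring L\<^esub> A) \<ominus>\<^bsub>poly_ring L\<^esub> (var L \<ominus>\<^bsub>poly_ring L\<^esub> A)"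
        using h unfolding Y_def lin_def by simp
      also have "\<dots> = Y \<ominus>\<^bsub>poly_ring L\<^esub> var L" using Yc Ac Xc by algebra
      finally show ?thesis unfolding f_def Y_def by simp
    qed
    have "lin \<otimes>\<^bsub>poly_ring L\<^esub> g = lin \<otimes>\<^bsub>poly_ring L\<^esub> (lin \<otimes>\<^bsub>poly_ring L\<^esub> c)"
      using flg fc2 linc c by (simp add: UP.m_assoc)
    moreover have "lin \<noteq> \<zero>\<^bsub>poly_ring L\<^esub>" unfolding lin_eq' univ_poly_zero by simp
    ultimately have gl: "g = lin \<otimes>\<^bsub>poly_ring L\<^esub> c" using UP.m_lcancel linc gc c by simp
    interpret H: ring_hom_ring "poly_ring L" L "\<lambda>p. eval p a"
      by (rule eval_ring_hom[OF carrier_is_subring a])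
    have "eval lin a = \<zero>" unfolding lin_def using Xc Ac a
      by (simp add: eval_var poly_const_eval[OF a a] A_def a_minus_def r_neg)
    hence ev0: "eval g a = \<zero>" unfolding gl using linc c by simp
    have "eval T a = tel L a a q"
      unfolding T_def using H.tel_hom[OF Xc Ac, of q] a poly_const_eval[OF a a] by (simp add: eval_var A_def)
    hence "eval g a = tel L a a q \<ominus> \<one>" unfolding g_def using Tc by (simp add: a_minus_def)
    hence "tel L a a q \<ominus> \<one> = \<zero>" using ev0 by simp
    hence tq: "tel L a a q = \<one>" using a tel_closed[OF a a, of q] r_right_minus_eq by simp
    show False
    proof (cases "a = \<zero>")
      case True
      obtain n where "q = Suc (Suc n)" using q2 by (metis add_2_eq_Suc le_iff_add)
      thus False using tq True tel_zero by simp
    next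
      case False
      have "a \<otimes> tel L a a q = [q] \<cdot> (a [^] q)" using a by (rule tel_aa)
      also have "\<dots> = \<zero>" unfolding q_def using q_ch[OF k] a by simp
      finally show False using tq False a by simp
    qed
  qed
  define M where "M = roots f"
  have cnt: "count M a \<le> 1" for a
  proof (cases "is_root f a")
    case True thus ?thesis using mult1 isr alg_mult_eq_count_roots[OF fc] unfolding M_def by metis
  next
    case False
    hence "a \<notin># roots f" using roots_mem_iff_is_root[OF fc] by simp
    hence "count (roots f) a = 0" by (simp add: not_in_iff)
    thus ?thesis unfolding M_def by simp
  qed
  have setM: "set_mset M = {x \<in> carrier L. x [^] q = x}"
    using roots_mem_iff_is_root[OF fc] isr unfolding M_def by auto
  have fin: "finite (set_mset M)" by simp
  have "M = mset_set (set_mset M)"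
  proof (rule multiset_eqI)
    fix x show "count M x = count (mset_set (set_mset M)) x"
    proof (cases "x \<in># M")
      case True
      hence "count M x > 0" by simp
      hence "count M x = 1" using cnt[of x] by linarith
      thus ?thesis using fin True by (simp add: count_mset_set')
    qed (auto simp: count_mset_set' not_in_iff)
  qed
  hence "size M = card (set_mset M)" by (metis size_mset_set)
  thus ?thesis using spl setM unfolding M_def q_def by simp
qed

end



context charp_closed begin

lemma S_subfield:
  assumes k: "k > 0"
  shows "subfield {x \<in> carrier L. x [^] (p ^ k) = x} L"
proof -
  define q where "q = p ^ k"
  have q0: "q \<noteq> 0" unfolding q_def using p_prime by (simp add: prime_gt_0_nat)
  let ?S = "{x \<in> carrier L. x [^] q = x}"
  have "subring ?S L"
  proof (rule subringI)
    show "?S \<subseteq> carrier L" by auto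
    show "\<one> \<in> ?S" by simp
  next
    fix h assume h: "h \<in> ?S"
    have "(h \<oplus> \<ominus> h) [^] q = h [^] q \<oplus> (\<ominus> h) [^] q"
      unfolding q_def using h by (intro frob_pow p_prime ch) auto
    hence "\<zero> = h \<oplus> (\<ominus> h) [^] q" using h q0 by (simp add: r_neg nat_pow_zero)
    hence "(\<ominus> h) [^] q \<oplus> h = \<zero>" using h by (simp add: add.m_comm)
    hence "\<ominus> h = (\<ominus> h) [^] q" using h by (intro minus_equality) auto
    thus "\<ominus> h \<in> ?S" using h by simp
  next
    fix h1 h2 assume h: "h1 \<in> ?S" "h2 \<in> ?S"
    thus "h1 \<otimes> h2 \<in> ?S" by (simp add: nat_pow_distrib)
    have "(h1 \<oplus> h2) [^] q = h1 [^] q \<oplus> h2 [^] q"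
      unfolding q_def using h by (intro frob_pow p_prime ch) auto
    thus "h1 \<oplus> h2 \<in> ?S" using h by simp
  qed
  moreover have "inv k' \<in> ?S" if k': "k' \<in> ?S - {\<zero>}" for k'
  proof -
    have u: "k' \<in> Units L" using k' field_Units by auto
    have ic: "inv k' \<in> carrier L" using u by simp
    have "k' \<otimes> (inv k') [^] q = k' [^] q \<otimes> (inv k') [^] q" using k' by simp
    also have "\<dots> = (k' \<otimes> inv k') [^] q" using k' ic by (simp add: nat_pow_distrib)
    also have "\<dots> = \<one>" using u by simp
    finally have "inv k' = (inv k') [^] q" using k' ic by (intro comm_inv_char) auto
    thus ?thesis using ic by simp
  qed
  ultimately show ?thesis unfolding q_def by (intro subfieldI') auto
qed

lemma two_ne: assumes "odd p" shows "\<one> \<oplus> \<one> \<noteq> \<zero>"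
proof
  assume h: "\<one> \<oplus> \<one> = \<zero>"
  obtain m where m: "p = 2 * m + 1" using assms oddE by blast
  have two: "[(2::nat)] \<cdot> \<one> = \<zero>" using h by (simp add: numeral_2_eq_2)
  have "[p] \<cdot> \<one> = [m] \<cdot> ([(2::nat)] \<cdot> \<one>) \<oplus> \<one>"
    unfolding m by (simp add: add.nat_pow_pow mult.commute)
  also have "\<dots> = \<one>" using two by simp
  finally show False using ch by simp
qed

lemma gf_in_closure:
  assumes k: "k > 0" and "odd p"
  shows "\<exists>F. F = L\<lparr>carrier := {x \<in> carrier L. x [^] (p ^ k) = x}\<rparr> \<and> field F \<and> finite (carrier F)
      \<and> card (carrier F) = p ^ k \<and> \<one>\<^bsub>F\<^esub> \<oplus>\<^bsub>F\<^esub> \<one>\<^bsub>F\<^esub> \<noteq> \<zero>\<^bsub>F\<^esub>"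
proof -
  have c: "card {x \<in> carrier L. x [^] (p ^ k) = x} = p ^ k" by (rule card_S[OF k])
  have "p ^ k > 0" using p_prime by (simp add: prime_gt_0_nat)
  hence "finite {x \<in> carrier L. x [^] (p ^ k) = x}" using c card.infinite by force
  thus ?thesis using subfield_iff(2)[OF S_subfield[OF k]] c two_ne[OF assms(2)] by simp
qed

end

lemma residue_char:
  assumes p: "prime p"
  shows "[p] \<cdot>\<^bsub>residue_ring (int p)\<^esub> \<one>\<^bsub>residue_ring (int p)\<^esub> = \<zero>\<^bsub>residue_ring (int p)\<^esub>"
proof -
  interpret RP: residues_prime p "residue_ring (int p)" by unfold_locales (use p in auto)
  have "[n] \<cdot>\<^bsub>residue_ring (int p)\<^esub> \<one>\<^bsub>residue_ring (int p)\<^esub> = int n mod int p" for n :: nat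
  proof (induction n)
    case 0 thus ?case by (simp add: RP.res_zero_eq)
  next
    case (Suc n)
    thus ?case by (simp add: RP.res_add_eq RP.res_one_eq mod_add_right_eq add.commute)
  qed
  thus ?thesis by (simp add: RP.res_zero_eq)
qed

lemma gf_exists:
  assumes p: "prime p" "odd p" and r: "r > 0"
  shows "\<exists>F :: ((int list \<times> nat) multiset \<Rightarrow> int) ring. field F \<and> finite (carrier F)
      \<and> card (carrier F) = p ^ r \<and> \<one>\<^bsub>F\<^esub> \<oplus>\<^bsub>F\<^esub> \<one>\<^bsub>F\<^esub> \<noteq> \<zero>\<^bsub>F\<^esub>"
proof -
  interpret RP: residues_prime p "residue_ring (int p)" by unfold_locales (use p in auto)
  define L where "L = field.alg_closure (residue_ring (int p))"
  have ac: "algebraic_closure L (ring.indexed_const (residue_ring (int p)) ` carrier (residue_ring (int p)))"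
    and hom: "ring.indexed_const (residue_ring (int p)) \<in> ring_hom (residue_ring (int p)) L"
    using field.alg_closureE[OF RP.is_field] unfolding L_def by auto
  interpret AC: algebraic_closure L "ring.indexed_const (residue_ring (int p)) ` carrier (residue_ring (int p))"
    by (rule ac)
  interpret H: ring_hom_ring "residue_ring (int p)" L "ring.indexed_const (residue_ring (int p))"
    by (rule ring_hom_ringI2[OF RP.ring_axioms AC.ring_axioms hom])
  have "ring.indexed_const (residue_ring (int p)) ([n] \<cdot>\<^bsub>residue_ring (int p)\<^esub> \<one>\<^bsub>residue_ring (int p)\<^esub>) = [n] \<cdot>\<^bsub>L\<^esub> \<one>\<^bsub>L\<^esub>" for n :: nat
    by (induction n) auto
  hence chL: "[p] \<cdot>\<^bsub>L\<^esub> \<one>\<^bsub>L\<^esub> = \<zero>\<^bsub>L\<^esub>" using residue_char[OF p(1)] by (metis H.hom_zero)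
  interpret CC: charp_closed L p by unfold_locales (use p chL in auto)
  show ?thesis using CC.gf_in_closure[OF r p(2)] by blast
qed


lemma three_pow_mod: "odd r \<Longrightarrow> ((3::nat) ^ r) mod 4 = 3"
proof -
  assume "odd r"
  then obtain m where r: "r = 2 * m + 1" using oddE by blast
  have "((3::nat) ^ (2 * m + 1)) mod 4 = 3"
  proof (induction m)
    case 0 show ?case by simp
  next
    case (Suc m)
    have "(3::nat) ^ (2 * Suc m + 1) = 9 * 3 ^ (2 * m + 1)" by (simp add: power_add power_mult)
    hence "(3::nat) ^ (2 * Suc m + 1) mod 4 = (9 * (3 ^ (2 * m + 1) mod 4)) mod 4" by (simp add: mod_mult_right_eq)
    thus ?case using Suc by simp
  qed
  thus ?thesis using r by simp
qed

lemma pow_mod4: "p mod 4 = 3 \<Longrightarrow> odd r \<Longrightarrow> ((p::nat) ^ r) mod 4 = 3"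
  by (metis power_mod three_pow_mod)

lemma prime_power_hadamard:
  assumes p: "prime p" "p mod 4 = 3" and r: "odd r"
  shows "\<exists>C. core (p ^ r) C"
proof -
  have op: "odd p" using p(2) by presburger
  have r0: "r > 0" using r by (cases r) auto
  obtain F :: "((int list \<times> nat) multiset \<Rightarrow> int) ring" where F: "field F" "finite (carrier F)"
      "card (carrier F) = p ^ r" "\<one>\<^bsub>F\<^esub> \<oplus>\<^bsub>F\<^esub> \<one>\<^bsub>F\<^esub> \<noteq> \<zero>\<^bsub>F\<^esub>"
    using gf_exists[OF p(1) op r0] by blast
  interpret PF: paley F
  proof (rule paley.intro[OF F(1)])
    show "paley_axioms F" using F pow_mod4[OF p(2) r] by (simp add: paley_axioms_def)
  qed
  show ?thesis using PF.paley_exists F(3) by simp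
qed

theorem proposition3p1:
  shows "\<exists>\<delta> :: nat \<Rightarrow> real.
    (\<forall>n. \<delta> n \<ge> 0) \<and> \<delta> \<longlonglongrightarrow> 0 \<and>
    (\<forall>n::nat. n > 0 \<and> hadamard_exists (n + 1) \<longrightarrow>
        (\<exists>M. orthogonal_mat n M \<and> flat_entries (\<delta> n) n M)) \<and>
    (\<forall>(p::nat) (r::nat). prime p \<and> p mod 4 = 3 \<and> odd r \<longrightarrow>
        hadamard_exists (p ^ r + 1) \<and>
        (\<exists>M. orthogonal_mat (p ^ r) M \<and> flat_entries (\<delta> (p ^ r)) (p ^ r) M)) \<and>
    (\<forall>n::nat. prime n \<and> n mod 4 = 3 \<longrightarrow>
        (\<exists>M. orthogonal_mat n M \<and> flat_entries (\<delta> n) n M \<and> circulant_mat n M))"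
proof (intro exI[of _ dlt] conjI allI impI)
  show "\<And>n. dlt n \<ge> 0" by (rule dlt_nonneg)
  show "dlt \<longlonglongrightarrow> 0" by (rule dlt_lim)
  have main: "\<exists>M. orthogonal_mat n M \<and> flat_entries (dlt n) n M" if "n > 0" "core n C" for n C
    using core_orth[OF that] core_flat[OF that] by blast
  fix n :: nat
  assume a: "0 < n \<and> hadamard_exists (n + 1)"
  then obtain H where "hadamard_matrix (n+1) H" unfolding hadamard_exists_def by blast
  then obtain C where "core n C" using had_to_core by blast
  thus "\<exists>M. orthogonal_mat n M \<and> flat_entries (dlt n) n M" using main a by blast
next
  fix p r :: nat
  assume a: "prime p \<and> p mod 4 = 3 \<and> odd r"
  then obtain C where C: "core (p ^ r) C" using prime_power_hadamard by blast
  show "hadamard_exists (p ^ r + 1)"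
    using core_to_had[OF C] unfolding hadamard_exists_def by blast
  have "p ^ r > 0" using a by (simp add: prime_gt_0_nat)
  thus "\<exists>M. orthogonal_mat (p ^ r) M \<and> flat_entries (dlt (p ^ r)) (p ^ r) M"
    using core_orth[OF _ C] core_flat[OF _ C] by blast
next
  fix n :: nat
  assume a: "prime n \<and> n mod 4 = 3"
  then obtain C where C: "core n C" "circ_int n C" using prime_core_circ by blast
  have "n > 0" using a by (simp add: prime_gt_0_nat)
  thus "\<exists>M. orthogonal_mat n M \<and> flat_entries (dlt n) n M \<and> circulant_mat n M"
    using core_orth[OF _ C(1)] core_flat[OF _ C(1)] core_circ[OF C(2)] by blast
qed

end
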